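(* The Cauchy structure on ${\mathbf{R}_\mathbf{D}}$ restricts to a Cauchy structure on ${\mathbf{R}_\mathbf{E}}$: equipping ${\mathbf{R}_\mathbf{E}}$ with the restricted premetric, $\mathsf{rat}$ and $\lim$ of ${\mathbf{R}_\mathbf{D}}$ restrict to maps $\mathbf{Q}\to{\mathbf{R}_\mathbf{E}}$ and $\mathcal{C}_{{\mathbf{R}_\mathbf{E}}}\to{\mathbf{R}_\mathbf{E}}$, there is $\mathsf{eq}:\prod_{u,v:{\mathbf{R}_\mathbf{E}}}(\forall\varepsilon.u\sim_\varepsilon v)\to u=v$, and the four closeness laws of a Cauchy structure hold on ${\mathbf{R}_\mathbf{E}}$.
   Context: Work in univalent type theory with propositional truncation, function extensionality and propositional resizing; $\Omega$ is the type of propositions, $\exists$ and $\vee$ are truncated; a subtype of $A$ is a map $A\to\Omega$, identified with $\sum_{a:A}P(a)$ and its first projection into $A$. $\mathbf{Q}$ is the rationals, $\mathbf{Q}_+$ the positive rationals. Premetric spaces and Cauchy structures: a premetric on $R$ is $\sim:\mathbf{Q}_+\times R\times R\to\Omega$; a Cauchy approximation is $x:\mathbf{Q}_+\to R$ with $\forall\delta,\varepsilon.\,x_\delta\sim_{\delta+\varepsilon}x_\varepsilon$, forming $\mathcal{C}_R$; $u$ is a limit of $x$ if $\forall\varepsilon,\theta.\,x_\varepsilon\sim_{\varepsilon+\theta}u$; $R$ is Cauchy complete if all Cauchy approximations have limits. A Cauchy structure is a premetric space $R$ with $\mathsf{rat}:\mathbf{Q}\to R$, $\lim:\mathcal{C}_R\to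 R$, $\mathsf{eq}:\prod_{u,v}(\forall\varepsilon.u\sim_\varepsilon v)\to u=v$, and the laws: $-\varepsilon<q-r<\varepsilon$ implies $\mathsf{rat}(q)\sim_\varepsilon\mathsf{rat}(r)$; $\mathsf{rat}(q)\sim_\varepsilon y_\delta$ implies $\mathsf{rat}(q)\sim_{\varepsilon+\delta}\lim(y)$; $x_\delta\sim_\varepsilon\mathsf{rat}(r)$ implies $\lim(x)\sim_{\varepsilon+\delta}\mathsf{rat}(r)$; $x_\delta\sim_\varepsilon y_\eta$ implies $\lim(x)\sim_{\varepsilon+\delta+\eta}\lim(y)$. Dedekind reals: for $L,U:\mathbf{Q}\to\Omega$ and $x=(L,U)$, $q<x$ means $L(q)$, $x<r$ means $U(r)$; $x$ is a Dedekind cut if inhabited ($\exists q.\,q<x$, $\exists r.\,x<r$), rounded ($q<x\Leftrightarrow\exists q'>q.\,q'<x$; $x<r\Leftrightarrow\exists r'<r.\,x<r'$), transitive ($q<x\wedge x<r\Rightarrow q<r$) and located ($q<r\Rightarrow q<x\vee x<r$); ${\mathbf{R}_\mathbf{D}}$ is their type. $\mathsf{rat}(q)$: $r<\mathsf{rat}(q)\Leftrightarrow r<q$, $\mathsf{rat}(q)<r\Leftrightarrow q<r$. $q<x+y:=\exists s,t.(q=s+t)\wedge(s<x)\wedge(t<y)$, $x+y<r:=\exists s,t.(r=s+t)\wedge(x<s)\wedge(y<t)$; $q<-x:=x<-q$, $-x<r:=-r<x$; $q<|x|:=(q<x)\vee(q<-x)$, $|x|<r:=(x<r)\wedge(-x<r)$;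 $x\sim_\varepsilon y:=|x+(-y)|<\varepsilon$. For $x:\mathcal{C}_{{\mathbf{R}_\mathbf{D}}}$: $q<\lim(x):=\exists(\varepsilon,\theta:\mathbf{Q}_+).\,q+\varepsilon+\theta<x_\varepsilon$ and $\lim(x)<r:=\exists(\varepsilon,\theta:\mathbf{Q}_+).\,x_\varepsilon<r-\varepsilon-\theta$. With these, ${\mathbf{R}_\mathbf{D}}$ is a Cauchy structure. Euclidean reals: a subtype $S$ of ${\mathbf{R}_\mathbf{D}}$ carries the restricted premetric. ${\mathbf{R}_\mathbf{E}}$ is the smallest subtype of ${\mathbf{R}_\mathbf{D}}$ containing all $\mathsf{rat}(q)$ and Cauchy complete for the restricted premetric; concretely $u\in{\mathbf{R}_\mathbf{E}}$ iff $u\in S$ for every such subtype $S$. *)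

theory Defs
  imports Complex_Main
begin

text \<open>A candidate Dedekind real is a pair (L, U) of sets of rationals:
  q < x means q \<in> fst x, and x < r means r \<in> snd x.\<close>

type_synonym cut = "rat set \<times> rat set"

definition is_cut :: "cut \<Rightarrow> bool" where
  "is_cut x \<longleftrightarrow>
     (\<exists>q. q \<in> fst x) \<and> (\<exists>r. r \<in> snd x) \<and>
     (\<forall>q. q \<in> fst x \<longleftrightarrow> (\<exists>q'. q < q' \<and> q' \<in> fst x)) \<and>
     (\<forall>r. r \<in> snd x \<longleftrightarrow> (\<exists>r'. r' < r \<and> r' \<in> snd x)) \<and>
     (\<forall>q r. q \<in> fst x \<and> r \<in> snd x \<longrightarrow> q < r) \<and>
     (\<forall>q r. q < r \<longrightarrow> q \<in> fst x \<or> r \<in> snd x)"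

definition RD :: "cut set" where
  "RD = {x. is_cut x}"

definition rat_D :: "rat \<Rightarrow> cut" where
  "rat_D q = ({r. r < q}, {r. q < r})"

definition add_D :: "cut \<Rightarrow> cut \<Rightarrow> cut" where
  "add_D x y =
     ({q. \<exists>s t. q = s + t \<and> s \<in> fst x \<and> t \<in> fst y},
      {r. \<exists>s t. r = s + t \<and> s \<in> snd x \<and> t \<in> snd y})"

definition neg_D :: "cut \<Rightarrow> cut" where
  "neg_D x = ({q. - q \<in> snd x}, {r. - r \<in> fst x})"

definition abs_D :: "cut \<Rightarrow> cut" where
  "abs_D x = ({q. q \<in> fst x \<or> q \<in> fst (neg_D x)},
              {r. r \<in> snd x \<and> r \<in> snd (neg_D x)})"

definition close_D :: "rat \<Rightarrow> cut \<Rightarrow> cut \<Rightarrow> bool" where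
  "close_D \<epsilon> x y \<longleftrightarrow> \<epsilon> \<in> snd (abs_D (add_D x (neg_D y)))"

text \<open>Cauchy approximations with values in a subtype S of the Dedekind reals
  (restricted premetric); only the values at positive rationals matter.\<close>
definition cauchy_approx :: "cut set \<Rightarrow> (rat \<Rightarrow> cut) \<Rightarrow> bool" where
  "cauchy_approx S x \<longleftrightarrow>
     (\<forall>\<delta>>0. x \<delta> \<in> S) \<and>
     (\<forall>\<delta> \<epsilon>. 0 < \<delta> \<longrightarrow> 0 < \<epsilon> \<longrightarrow> close_D (\<delta> + \<epsilon>) (x \<delta>) (x \<epsilon>))"

definition is_limit :: "(rat \<Rightarrow> cut) \<Rightarrow> cut \<Rightarrow> bool" where
  "is_limit x u \<longleftrightarrow>
     (\<forall>\<epsilon> \<theta>. 0 < \<epsilon> \<longrightarrow> 0 < \<theta> \<longrightarrow> close_D (\<epsilon> + \<theta>) (x \<epsilon>) u)"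

definition cauchy_complete :: "cut set \<Rightarrow> bool" where
  "cauchy_complete S \<longleftrightarrow> (\<forall>x. cauchy_approx S x \<longrightarrow> (\<exists>u\<in>S. is_limit x u))"

definition lim_D :: "(rat \<Rightarrow> cut) \<Rightarrow> cut" where
  "lim_D x =
     ({q. \<exists>\<epsilon> \<theta>. 0 < \<epsilon> \<and> 0 < \<theta> \<and> q + \<epsilon> + \<theta> \<in> fst (x \<epsilon>)},
      {r. \<exists>\<epsilon> \<theta>. 0 < \<epsilon> \<and> 0 < \<theta> \<and> r - \<epsilon> - \<theta> \<in> snd (x \<epsilon>)})"

definition RE :: "cut set" where
  "RE = {u. u \<in> RD \<and>
           (\<forall>S. S \<subseteq> RD \<longrightarrow> range rat_D \<subseteq> S \<longrightarrow> cauchy_complete S \<longrightarrow> u \<in> S)}"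

end

theory Submission
  imports Defs
begin

definition ct :: "real \<Rightarrow> cut" where
  "ct a = ({q. of_rat q < a}, {r. a < of_rat r})"

definition rv :: "cut \<Rightarrow> real" where
  "rv x = Sup (of_rat ` fst x)"

lemma ct_RD: "ct a \<in> RD"
proof -
  obtain q :: rat where q: "a - 1 < of_rat q \<and> of_rat q < a" using of_rat_dense[of "a-1" a] by auto
  obtain r :: rat where r: "a < of_rat r \<and> of_rat r < a + 1" using of_rat_dense[of a "a+1"] by auto
  have rl: "(of_rat q < a) = (\<exists>q'. q < q' \<and> of_rat q' < a)" for q
  proof
    assume "of_rat q < a"
    then have "\<exists>s::rat. of_rat q < (of_rat s :: real) \<and> of_rat s < a" by (rule of_rat_dense)
    then obtain s where "of_rat q < (of_rat s :: real) \<and> of_rat s < a" by (elim exE)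
    then show "\<exists>q'. q < q' \<and> of_rat q' < a" by (auto simp: of_rat_less)
  next
    assume "\<exists>q'. q < q' \<and> of_rat q' < a"
    then obtain q' where "q < q'" "of_rat q' < a" by blast
    moreover have "(of_rat q :: real) < of_rat q'" using \<open>q < q'\<close> by (simp add: of_rat_less)
    ultimately show "of_rat q < a" by linarith
  qed
  have ru: "(a < of_rat r) = (\<exists>r'. r' < r \<and> a < of_rat r')" for r
  proof
    assume "a < of_rat r"
    then have "\<exists>s::rat. a < of_rat s \<and> of_rat s < (of_rat r :: real)" by (rule of_rat_dense)
    then obtain s where "a < of_rat s \<and> of_rat s < (of_rat r :: real)" by (elim exE)
    then show "\<exists>r'. r' < r \<and> a < of_rat r'" by (auto simp: of_rat_less)
  next
    assume "\<exists>r'. r' < r \<and> a < of_rat r'"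
    then obtain r' where "r' < r" "a < of_rat r'" by blast
    moreover have "(of_rat r' :: real) < of_rat r" using \<open>r' < r\<close> by (simp add: of_rat_less)
    ultimately show "a < of_rat r" by linarith
  qed
  have tr: "of_rat q < a \<and> a < of_rat r \<longrightarrow> q < r" for q r
  proof
    assume "of_rat q < a \<and> a < of_rat r"
    then have "(of_rat q :: real) < of_rat r" by linarith
    then show "q < r" by (simp add: of_rat_less)
  qed
  have lo: "q < r \<longrightarrow> of_rat q < a \<or> a < of_rat r" for q r
  proof
    assume "q < r"
    then have "(of_rat q :: real) < of_rat r" by (simp add: of_rat_less)
    then show "of_rat q < a \<or> a < of_rat r" by linarith
  qed
  have "is_cut (ct a)" unfolding is_cut_def ct_def fst_conv snd_conv mem_Collect_eq
  proof (intro conjI allI)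
    show "\<exists>q. of_rat q < a" using q by blast
    show "\<exists>r. a < of_rat r" using r by blast
  qed (use rl ru tr lo in blast)+
  then show ?thesis by (simp add: RD_def)
qed

lemma RD_ct:
  assumes "x \<in> RD" shows "x = ct (rv x)"
proof -
  have c: "is_cut x" using assms by (simp add: RD_def)
  note cc = c[unfolded is_cut_def]
  obtain q0 where q0: "q0 \<in> fst x" using cc by (elim conjE exE)
  obtain r0 where r0: "r0 \<in> snd x" using cc by (elim conjE exE)
  have rlq': "\<forall>q. q \<in> fst x \<longleftrightarrow> (\<exists>q'. q < q' \<and> q' \<in> fst x)" using cc by (elim conjE)
  have rlr': "\<forall>r. r \<in> snd x \<longleftrightarrow> (\<exists>r'. r' < r \<and> r' \<in> snd x)" using cc by (elim conjE)
  have tr': "\<forall>q r. q \<in> fst x \<and> r \<in> snd x \<longrightarrow> q < r" using cc by (elim conjE)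
  have lo': "\<forall>q r. q < r \<longrightarrow> q \<in> fst x \<or> r \<in> snd x" using cc by (elim conjE)
  have rlq: "\<And>q. q \<in> fst x \<longleftrightarrow> (\<exists>q'. q < q' \<and> q' \<in> fst x)" using rlq' by (rule spec)
  have rlr: "\<And>r. r \<in> snd x \<longleftrightarrow> (\<exists>r'. r' < r \<and> r' \<in> snd x)" using rlr' by (rule spec)
  have tr: "\<And>q r. q \<in> fst x \<Longrightarrow> r \<in> snd x \<Longrightarrow> q < r" using tr' by blast
  have lo: "\<And>q r. q < r \<Longrightarrow> q \<in> fst x \<or> r \<in> snd x" using lo' by blast
  let ?A = "of_rat ` fst x :: real set"
  have ne: "?A \<noteq> {}" using q0 by auto
  have bdd: "bdd_above ?A"
  proof (rule bdd_aboveI[of _ "of_rat r0"])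
    fix y assume "y \<in> ?A"
    then obtain q where q: "q \<in> fst x" "y = of_rat q" by blast
    then have "q < r0" using tr r0 by blast
    then show "y \<le> of_rat r0" using q by (simp add: of_rat_less_eq)
  qed
  have ub: "rv x \<le> of_rat r" if r: "r \<in> snd x" for r
    unfolding rv_def
  proof (rule cSup_least[OF ne])
    fix y assume "y \<in> ?A"
    then obtain q where q: "q \<in> fst x" "y = of_rat q" by blast
    then have "q < r" using tr r by blast
    then show "y \<le> of_rat r" using q by (simp add: of_rat_less_eq)
  qed
  have f: "q \<in> fst x \<longleftrightarrow> of_rat q < rv x" for q
  proof
    assume "q \<in> fst x"
    then obtain q' where q': "q < q'" "q' \<in> fst x" using rlq[of q] by blast
    have "(of_rat q' :: real) \<in> ?A" using q' by blast
    then have "of_rat q' \<le> rv x" unfolding rv_def using bdd by (rule cSup_upper)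
    moreover have "(of_rat q :: real) < of_rat q'" using q' by (simp add: of_rat_less)
    ultimately show "of_rat q < rv x" by linarith
  next
    assume "of_rat q < rv x"
    then have "\<exists>y\<in>?A. of_rat q < y" unfolding rv_def using less_cSup_iff[OF ne bdd] by blast
    then obtain y where "y \<in> ?A" "of_rat q < y" by blast
    then obtain q' where "q' \<in> fst x" "of_rat q < (of_rat q' :: real)" by blast
    then have "q' \<in> fst x" "q < q'" by (auto simp: of_rat_less)
    then show "q \<in> fst x" using rlq[of q] by blast
  qed
  have s: "r \<in> snd x \<longleftrightarrow> rv x < of_rat r" for r
  proof
    assume "r \<in> snd x"
    then obtain r' where "r' < r" "r' \<in> snd x" using rlr[of r] by blast
    then show "rv x < of_rat r" using ub[of r'] by (meson less_le_trans not_le of_rat_less)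
  next
    assume "rv x < of_rat r"
    then obtain s where s: "rv x < of_rat s" "of_rat s < (of_rat r :: real)" using of_rat_dense[of "rv x" "of_rat r"] by blast
    then have "s < r" by (simp add: of_rat_less)
    moreover have "s \<notin> fst x" using f s by auto
    ultimately show "r \<in> snd x" using lo[of s r] by blast
  qed
  show ?thesis unfolding ct_def by (rule prod_eqI) (auto simp: f s)
qed

lemma add_ct: "add_D (ct a) (ct b) = ct (a + b)"
proof -
  have 1: "(\<exists>s t. q = s + t \<and> of_rat s < a \<and> of_rat t < b) \<longleftrightarrow> of_rat q < a + b" for q
  proof
    assume "\<exists>s t. q = s + t \<and> of_rat s < a \<and> of_rat t < b"
    then show "of_rat q < a + b" by (auto simp: of_rat_add)
  next
    assume h: "of_rat q < a + b"
    then obtain s where s: "of_rat q - b < of_rat s" "of_rat s < a" using of_rat_dense[of "of_rat q - b" a] by auto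
    then have "of_rat (q - s) < b" by (simp add: of_rat_diff)
    then show "\<exists>s t. q = s + t \<and> of_rat s < a \<and> of_rat t < b" using s by (intro exI[of _ s] exI[of _ "q - s"]) auto
  qed
  have 2: "(\<exists>s t. q = s + t \<and> a < of_rat s \<and> b < of_rat t) \<longleftrightarrow> a + b < of_rat q" for q
  proof
    assume "\<exists>s t. q = s + t \<and> a < of_rat s \<and> b < of_rat t"
    then show "a + b < of_rat q" by (auto simp: of_rat_add)
  next
    assume h: "a + b < of_rat q"
    then obtain s where s: "a < of_rat s" "of_rat s < of_rat q - b" using of_rat_dense[of a "of_rat q - b"] by auto
    then have "b < of_rat (q - s)" by (simp add: of_rat_diff)
    then show "\<exists>s t. q = s + t \<and> a < of_rat s \<and> b < of_rat t" using s by (intro exI[of _ s] exI[of _ "q - s"]) auto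
  qed
  show ?thesis unfolding add_D_def ct_def using 1 2 by auto
qed

lemma neg_ct: "neg_D (ct a) = ct (- a)"
  unfolding neg_D_def ct_def by (auto simp: of_rat_minus)

lemma close_ct: "close_D e (ct a) (ct b) \<longleftrightarrow> \<bar>a - b\<bar> < of_rat e"
  unfolding close_D_def neg_ct add_ct abs_D_def by (auto simp: ct_def of_rat_minus)

lemma rat_ct: "rat_D q = ct (of_rat q)"
  unfolding rat_D_def ct_def by (auto simp: of_rat_less)

lemma lim_real:
  assumes g: "\<And>\<delta>. 0 < \<delta> \<Longrightarrow> x \<delta> = ct (g \<delta>)"
    and c: "\<And>\<delta> \<epsilon>. 0 < \<delta> \<Longrightarrow> 0 < \<epsilon> \<Longrightarrow> \<bar>g \<delta> - g \<epsilon>\<bar> < of_rat (\<delta> + \<epsilon>)"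
  shows "\<exists>L. lim_D x = ct L \<and> (\<forall>\<delta>>0. \<bar>g \<delta> - L\<bar> \<le> of_rat \<delta>)"
proof -
  define A where "A = {g \<delta> - of_rat \<delta> | \<delta>. \<delta> > 0}"
  define L where "L = Sup A"
  have ne: "A \<noteq> {}" unfolding A_def by (auto intro!: exI[of _ 1])
  have bd: "\<And>\<epsilon>. 0 < \<epsilon> \<Longrightarrow> \<forall>a\<in>A. a \<le> g \<epsilon> + of_rat \<epsilon>"
  proof
    fix \<epsilon> :: rat and a assume e: "0 < \<epsilon>" and "a \<in> A"
    then obtain \<delta> where d: "0 < \<delta>" "a = g \<delta> - of_rat \<delta>" unfolding A_def by auto
    have "\<bar>g \<delta> - g \<epsilon>\<bar> < of_rat (\<delta> + \<epsilon>)" using c d e by auto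
    then show "a \<le> g \<epsilon> + of_rat \<epsilon>" using d by (simp add: of_rat_add)
  qed
  have bdd: "bdd_above A" using bd[of 1] unfolding bdd_above_def by auto
  have up: "\<And>\<epsilon>. 0 < \<epsilon> \<Longrightarrow> L \<le> g \<epsilon> + of_rat \<epsilon>"
    unfolding L_def using bd ne by (auto intro: cSup_least)
  have lo: "\<And>\<epsilon>. 0 < \<epsilon> \<Longrightarrow> g \<epsilon> - of_rat \<epsilon> \<le> L"
    unfolding L_def using bdd by (auto intro!: cSup_upper simp: A_def)
  have est: "\<forall>\<delta>>0. \<bar>g \<delta> - L\<bar> \<le> of_rat \<delta>" 
  proof (intro allI impI)
    fix d :: rat assume "0 < d" then show "\<bar>g d - L\<bar> \<le> of_rat d" using up[of d] lo[of d] by linarith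
  qed
  have f: "(\<exists>\<epsilon> \<theta>. 0 < \<epsilon> \<and> 0 < \<theta> \<and> q + \<epsilon> + \<theta> \<in> fst (x \<epsilon>)) \<longleftrightarrow> of_rat q < L" for q
  proof
    assume "\<exists>\<epsilon> \<theta>. 0 < \<epsilon> \<and> 0 < \<theta> \<and> q + \<epsilon> + \<theta> \<in> fst (x \<epsilon>)"
    then obtain \<epsilon> \<theta> where h: "0 < \<epsilon>" "0 < \<theta>" "of_rat (q + \<epsilon> + \<theta>) < g \<epsilon>"
      using g by (auto simp: ct_def)
    have "(0::real) < of_rat \<theta>" using h by simp
    moreover have "of_rat (q + \<epsilon> + \<theta>) = of_rat q + of_rat \<epsilon> + (of_rat \<theta> :: real)" by (simp add: of_rat_add)
    ultimately show "of_rat q < L" using h(3) lo[OF h(1)] by linarith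
  next
    assume "of_rat q < L"
    then obtain e where e: "(0::real) < of_rat e" "of_rat e < (L - of_rat q) / 3" using of_rat_dense[of 0 "(L - of_rat q)/3"] by auto
    have "0 < e" using e by simp
    have e3: "3 * of_rat e < L - of_rat q" using e by (simp add: field_simps)
    moreover have "of_rat (q + e + e) = of_rat q + of_rat e + (of_rat e :: real)" by (simp only: of_rat_add)
    then have "of_rat (q + e + e) < g e" using up[OF \<open>0 < e\<close>] e e3 by linarith
    ultimately show "\<exists>\<epsilon> \<theta>. 0 < \<epsilon> \<and> 0 < \<theta> \<and> q + \<epsilon> + \<theta> \<in> fst (x \<epsilon>)"
      using g[OF \<open>0 < e\<close>] \<open>0 < e\<close> by (intro exI[of _ e]) (auto simp: ct_def)
  qed
  have s: "(\<exists>\<epsilon> \<theta>. 0 < \<epsilon> \<and> 0 < \<theta> \<and> r - \<epsilon> - \<theta> \<in> snd (x \<epsilon>)) \<longleftrightarrow> L < of_rat r" for r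
  proof
    assume "\<exists>\<epsilon> \<theta>. 0 < \<epsilon> \<and> 0 < \<theta> \<and> r - \<epsilon> - \<theta> \<in> snd (x \<epsilon>)"
    then obtain \<epsilon> \<theta> where h: "0 < \<epsilon>" "0 < \<theta>" "g \<epsilon> < of_rat (r - \<epsilon> - \<theta>)"
      using g by (auto simp: ct_def)
    have "(0::real) < of_rat \<theta>" using h by simp
    moreover have "of_rat (r - \<epsilon> - \<theta>) = of_rat r - of_rat \<epsilon> - (of_rat \<theta> :: real)" by (simp add: of_rat_diff)
    ultimately show "L < of_rat r" using h(3) up[OF h(1)] by linarith
  next
    assume "L < of_rat r"
    then obtain e where e: "(0::real) < of_rat e" "of_rat e < (of_rat r - L) / 3" using of_rat_dense[of 0 "(of_rat r - L)/3"] by auto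
    have "0 < e" using e by simp
    have e3: "3 * of_rat e < of_rat r - L" using e by (simp add: field_simps)
    moreover have "of_rat (r - e - e) = of_rat r - of_rat e - (of_rat e :: real)" by (simp only: of_rat_diff)
    then have "g e < of_rat (r - e - e)" using lo[OF \<open>0 < e\<close>] e e3 by linarith
    ultimately show "\<exists>\<epsilon> \<theta>. 0 < \<epsilon> \<and> 0 < \<theta> \<and> r - \<epsilon> - \<theta> \<in> snd (x \<epsilon>)"
      using g[OF \<open>0 < e\<close>] \<open>0 < e\<close> by (intro exI[of _ e]) (auto simp: ct_def)
  qed
  have "lim_D x = ct L" unfolding lim_D_def ct_def by (rule prod_eqI; rule set_eqI; simp only: fst_conv snd_conv mem_Collect_eq f s)
  then show ?thesis using est by blast
qed

lemma RE_RD: "RE \<subseteq> RD" unfolding RE_def by auto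

lemma eq_real: assumes "\<And>e::rat. 0 < e \<Longrightarrow> \<bar>a - b\<bar> < of_rat e" shows "a = (b::real)"
proof (rule ccontr)
  assume "a \<noteq> b"
  then obtain e where "(0::real) < of_rat e" "of_rat e < \<bar>a - b\<bar>" using of_rat_dense[of 0 "\<bar>a - b\<bar>"] by auto
  then show False using assms[of e] by simp
qed

lemma cauchy_real:
  assumes "cauchy_approx RE x"
  shows "\<exists>L. lim_D x = ct L \<and> (\<forall>\<delta>>0. x \<delta> = ct (rv (x \<delta>)) \<and> \<bar>rv (x \<delta>) - L\<bar> \<le> of_rat \<delta>)"
proof -
  have g: "\<And>\<delta>. 0 < \<delta> \<Longrightarrow> x \<delta> = ct (rv (x \<delta>))"
    using assms RE_RD RD_ct unfolding cauchy_approx_def by blast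
  have c: "\<And>\<delta> \<epsilon>. 0 < \<delta> \<Longrightarrow> 0 < \<epsilon> \<Longrightarrow> \<bar>rv (x \<delta>) - rv (x \<epsilon>)\<bar> < of_rat (\<delta> + \<epsilon>)"
    using assms unfolding cauchy_approx_def by (metis g close_ct)
  show ?thesis using lim_real[of x "\<lambda>d. rv (x d)", OF g c] g by blast
qed

lemma lim_in_RE:
  assumes x: "cauchy_approx RE x" shows "lim_D x \<in> RE"
proof -
  obtain L where L: "lim_D x = ct L" and e: "\<And>\<delta>. 0 < \<delta> \<Longrightarrow> x \<delta> = ct (rv (x \<delta>)) \<and> \<bar>rv (x \<delta>) - L\<bar> \<le> of_rat \<delta>"
    using cauchy_real[OF x] by blast
  have "lim_D x \<in> S" if S: "S \<subseteq> RD" "range rat_D \<subseteq> S" "cauchy_complete S" for S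
  proof -
    have "RE \<subseteq> S" using S unfolding RE_def by blast
    then have "cauchy_approx S x" using x unfolding cauchy_approx_def by blast
    then obtain u where u: "u \<in> S" "is_limit x u" using S(3) unfolding cauchy_complete_def by blast
    have uc: "u = ct (rv u)" using u S RD_ct by blast
    have "L = rv u"
    proof (rule eq_real)
      fix a :: rat assume a: "0 < a"
      define d where "d = a / 4"
      have d: "0 < d" using a by (simp add: d_def)
      have "close_D (d + d) (x d) u" using u(2) d unfolding is_limit_def by blast
      then have c1: "\<bar>rv (x d) - rv u\<bar> < of_rat (d + d)" using e[OF d] uc by (metis close_ct)
      have c2: "\<bar>rv (x d) - L\<bar> \<le> of_rat d" using e[OF d] by blast
      have "of_rat a = 4 * (of_rat d :: real)" by (simp add: d_def of_rat_divide)
      moreover have "of_rat (d + d) = of_rat d + (of_rat d :: real)" by (simp only: of_rat_add)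
      moreover have "(0::real) < of_rat d" using d by simp
      ultimately show "\<bar>L - rv u\<bar> < of_rat a" using c1 c2 by linarith
    qed
    then show ?thesis using L uc u by simp
  qed
  moreover have "lim_D x \<in> RD" using L ct_RD by simp
  ultimately show ?thesis unfolding RE_def by blast
qed

theorem proposition2p28:
  shows "(\<forall>q. rat_D q \<in> RE)
    \<and> (\<forall>x. cauchy_approx RE x \<longrightarrow> lim_D x \<in> RE)
    \<and> (\<forall>u\<in>RE. \<forall>v\<in>RE. (\<forall>\<epsilon>>0. close_D \<epsilon> u v) \<longrightarrow> u = v)
    \<and> (\<forall>q r \<epsilon>. 0 < \<epsilon> \<longrightarrow> - \<epsilon> < q - r \<longrightarrow> q - r < \<epsilon> \<longrightarrow> close_D \<epsilon> (rat_D q) (rat_D r))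
    \<and> (\<forall>q y \<epsilon> \<delta>. cauchy_approx RE y \<longrightarrow> 0 < \<epsilon> \<longrightarrow> 0 < \<delta> \<longrightarrow>
          close_D \<epsilon> (rat_D q) (y \<delta>) \<longrightarrow> close_D (\<epsilon> + \<delta>) (rat_D q) (lim_D y))
    \<and> (\<forall>x r \<epsilon> \<delta>. cauchy_approx RE x \<longrightarrow> 0 < \<epsilon> \<longrightarrow> 0 < \<delta> \<longrightarrow>
          close_D \<epsilon> (x \<delta>) (rat_D r) \<longrightarrow> close_D (\<epsilon> + \<delta>) (lim_D x) (rat_D r))
    \<and> (\<forall>x y \<epsilon> \<delta> \<eta>. cauchy_approx RE x \<longrightarrow> cauchy_approx RE y \<longrightarrow>
          0 < \<epsilon> \<longrightarrow> 0 < \<delta> \<longrightarrow> 0 < \<eta> \<longrightarrow>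
          close_D \<epsilon> (x \<delta>) (y \<eta>) \<longrightarrow> close_D (\<epsilon> + \<delta> + \<eta>) (lim_D x) (lim_D y))"
proof (intro conjI allI impI ballI)
  fix q show "rat_D q \<in> RE" unfolding RE_def using ct_RD rat_ct by auto
next
  fix x :: "rat \<Rightarrow> cut" assume "cauchy_approx RE x" then show "lim_D x \<in> RE" by (rule lim_in_RE)
next
  fix u v assume u: "u \<in> RE" and v: "v \<in> RE" and c: "\<forall>\<epsilon>>0. close_D \<epsilon> u v"
  have uc: "u = ct (rv u)" and vc: "v = ct (rv v)" using u v RE_RD RD_ct by blast+
  have "rv u = rv v" using c by (intro eq_real) (metis uc vc close_ct)
  then show "u = v" using uc vc by simp
next
  fix q r \<epsilon> :: rat assume "0 < \<epsilon>" "- \<epsilon> < q - r" "q - r < \<epsilon>"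
  then have "\<bar>q - r\<bar> < \<epsilon>" by linarith
  then have "\<bar>of_rat q - of_rat r\<bar> < (of_rat \<epsilon> :: real)"
  proof -
    have "\<bar>of_rat q - of_rat r\<bar> = (of_rat \<bar>q - r\<bar> :: real)" by (simp add: of_rat_diff[symmetric])
    then show ?thesis using \<open>\<bar>q - r\<bar> < \<epsilon>\<close> by (simp add: of_rat_less)
  qed
  then show "close_D \<epsilon> (rat_D q) (rat_D r)" by (simp add: rat_ct close_ct)
next
  fix q \<epsilon> \<delta> :: rat and y assume y: "cauchy_approx RE y" and "0 < \<epsilon>" "0 < \<delta>"
    and c: "close_D \<epsilon> (rat_D q) (y \<delta>)"
  obtain L where L: "lim_D y = ct L" and e: "y \<delta> = ct (rv (y \<delta>))" "\<bar>rv (y \<delta>) - L\<bar> \<le> of_rat \<delta>"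
    using cauchy_real[OF y] \<open>0 < \<delta>\<close> by blast
  have "\<bar>of_rat q - rv (y \<delta>)\<bar> < (of_rat \<epsilon> :: real)" using c e by (metis rat_ct close_ct)
  then have "\<bar>of_rat q - L\<bar> < (of_rat (\<epsilon> + \<delta>) :: real)" using e(2) by (simp add: of_rat_add)
  then show "close_D (\<epsilon> + \<delta>) (rat_D q) (lim_D y)" by (simp add: L rat_ct close_ct)
next
  fix r \<epsilon> \<delta> :: rat and x assume x: "cauchy_approx RE x" and "0 < \<epsilon>" "0 < \<delta>"
    and c: "close_D \<epsilon> (x \<delta>) (rat_D r)"
  obtain L where L: "lim_D x = ct L" and e: "x \<delta> = ct (rv (x \<delta>))" "\<bar>rv (x \<delta>) - L\<bar> \<le> of_rat \<delta>"
    using cauchy_real[OF x] \<open>0 < \<delta>\<close> by blast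
  have "\<bar>rv (x \<delta>) - of_rat r\<bar> < (of_rat \<epsilon> :: real)" using c e by (metis rat_ct close_ct)
  then have "\<bar>L - of_rat r\<bar> < (of_rat (\<epsilon> + \<delta>) :: real)" using e(2) by (simp add: of_rat_add)
  then show "close_D (\<epsilon> + \<delta>) (lim_D x) (rat_D r)" by (simp add: L rat_ct close_ct)
next
  fix \<epsilon> \<delta> \<eta> :: rat and x y assume x: "cauchy_approx RE x" and y: "cauchy_approx RE y"
    and "0 < \<epsilon>" "0 < \<delta>" "0 < \<eta>" and c: "close_D \<epsilon> (x \<delta>) (y \<eta>)"
  obtain L where L: "lim_D x = ct L" and e: "x \<delta> = ct (rv (x \<delta>))" "\<bar>rv (x \<delta>) - L\<bar> \<le> of_rat \<delta>"
    using cauchy_real[OF x] \<open>0 < \<delta>\<close> by blast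
  obtain M where M: "lim_D y = ct M" and f: "y \<eta> = ct (rv (y \<eta>))" "\<bar>rv (y \<eta>) - M\<bar> \<le> of_rat \<eta>"
    using cauchy_real[OF y] \<open>0 < \<eta>\<close> by blast
  have "\<bar>rv (x \<delta>) - rv (y \<eta>)\<bar> < (of_rat \<epsilon> :: real)" using c e f by (metis close_ct)
  then have "\<bar>L - M\<bar> < (of_rat (\<epsilon> + \<delta> + \<eta>) :: real)" using e(2) f(2) by (simp add: of_rat_add)
  then show "close_D (\<epsilon> + \<delta> + \<eta>) (lim_D x) (lim_D y)" by (simp add: L M close_ct)
qed

end
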